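(* Every $K$-algebra endomorphism of $\mathbb{S}_1$ is either injective or its image is a commutative finite-dimensional algebra. Moreover, for every positive integer $d$ there is an endomorphism of $\mathbb{S}_1$ whose image has dimension exactly $d$.
   Context: $K$ is a field of characteristic zero and $\mathbb{S}_1=K\langle x,y\mid yx=1\rangle$ is the $K$-algebra generated by $x,y$ with the single defining relation $yx=1$. *)

theory Defs
  imports Main
begin

text \<open>The monoid with presentation
  <x,y | yx = 1> (the bicyclic monoid) has normal forms x^i y^j, encoded as pairs (i,j),
  with product (x^i y^j)(x^k y^l) = x^(i + (k - j)) y^(l + (j - k)) (truncated subtraction).
  S_1 is its monoid algebra: finitely supported functions nat \<times> nat \<Rightarrow> K.\<close>

definition bmul :: "nat \<times> nat \<Rightarrow> nat \<times> nat \<Rightarrow> nat \<times> nat" where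
  "bmul p q = (fst p + (fst q - snd p), snd q + (snd p - fst q))"

type_synonym 'k s1elt = "nat \<times> nat \<Rightarrow> 'k"

definition supp1 :: "'k::zero s1elt \<Rightarrow> (nat \<times> nat) set" where
  "supp1 f = {p. f p \<noteq> 0}"

definition S1 :: "'k::field s1elt set" where
  "S1 = {f. finite (supp1 f)}"

definition s1_mult :: "'k::field s1elt \<Rightarrow> 'k s1elt \<Rightarrow> 'k s1elt" where
  "s1_mult f g = (\<lambda>r. \<Sum>p\<in>supp1 f. \<Sum>q\<in>supp1 g. if bmul p q = r then f p * g q else 0)"

definition s1_one :: "'k::field s1elt" where
  "s1_one = (\<lambda>p. if p = (0,0) then 1 else 0)"

definition s1_x :: "'k::field s1elt" where
  "s1_x = (\<lambda>p. if p = (1,0) then 1 else 0)"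

definition s1_y :: "'k::field s1elt" where
  "s1_y = (\<lambda>p. if p = (0,1) then 1 else 0)"

definition s1_add :: "'k::field s1elt \<Rightarrow> 'k s1elt \<Rightarrow> 'k s1elt" where
  "s1_add f g = (\<lambda>p. f p + g p)"

definition s1_zero :: "'k::field s1elt" where
  "s1_zero = (\<lambda>p. 0)"

definition s1_scale :: "'k::field \<Rightarrow> 'k s1elt \<Rightarrow> 'k s1elt" where
  "s1_scale c f = (\<lambda>p. c * f p)"

definition s1_endo :: "('k::field s1elt \<Rightarrow> 'k s1elt) \<Rightarrow> bool" where
  "s1_endo \<phi> \<longleftrightarrow> \<phi> ` S1 \<subseteq> S1
     \<and> (\<forall>f\<in>S1. \<forall>g\<in>S1. \<phi> (s1_add f g) = s1_add (\<phi> f) (\<phi> g))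
     \<and> (\<forall>c. \<forall>f\<in>S1. \<phi> (s1_scale c f) = s1_scale c (\<phi> f))
     \<and> (\<forall>f\<in>S1. \<forall>g\<in>S1. \<phi> (s1_mult f g) = s1_mult (\<phi> f) (\<phi> g))
     \<and> \<phi> s1_one = s1_one"

definition s1_commutative :: "'k::field s1elt set \<Rightarrow> bool" where
  "s1_commutative A \<longleftrightarrow> (\<forall>a\<in>A. \<forall>b\<in>A. s1_mult a b = s1_mult b a)"

definition fold_s1 :: "('k::field s1elt \<Rightarrow> 'k) \<Rightarrow> 'k s1elt set \<Rightarrow> 'k s1elt" where
  "fold_s1 a B = (\<lambda>p. \<Sum>b\<in>B. a b * b p)"

definition s1_spans :: "'k::field s1elt set \<Rightarrow> 'k s1elt set \<Rightarrow> bool" where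
  "s1_spans B A \<longleftrightarrow> (\<forall>v\<in>A. \<exists>a. v = fold_s1 a B)"

definition s1_lin_indep :: "'k::field s1elt set \<Rightarrow> bool" where
  "s1_lin_indep B \<longleftrightarrow> (\<forall>a. fold_s1 a B = s1_zero \<longrightarrow> (\<forall>b\<in>B. a b = 0))"

definition s1_fin_dim :: "'k::field s1elt set \<Rightarrow> bool" where
  "s1_fin_dim A \<longleftrightarrow> (\<exists>B. finite B \<and> B \<subseteq> A \<and> s1_spans B A)"

definition s1_has_dim :: "'k::field s1elt set \<Rightarrow> nat \<Rightarrow> bool" where
  "s1_has_dim A d \<longleftrightarrow> (\<exists>B. finite B \<and> card B = d \<and> B \<subseteq> A \<and> s1_spans B A \<and> s1_lin_indep B)"

end

theory Submission
  imports Defs "HOL-Library.Poly_Mapping" "HOL.Vector_Spaces"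
begin

abbreviation lk where "lk \<equiv> Poly_Mapping.lookup"
abbreviation sng where "sng \<equiv> Poly_Mapping.single"
abbreviation ks where "ks \<equiv> Poly_Mapping.keys"

datatype bic = B nat nat

instantiation bic :: monoid_add
begin
fun plus_bic :: "bic \<Rightarrow> bic \<Rightarrow> bic" where
  "plus_bic (B a b) (B c d) = B (a + (c - b)) (d + (b - c))"
definition zero_bic :: bic where "zero_bic = B 0 0"
instance
proof
  fix x y z :: bic
  show "x + y + z = x + (y + z)"
    by (cases x; cases y; cases z) (simp split: nat_diff_split)
  show "0 + x = x" by (cases x) (simp add: zero_bic_def)
  show "x + 0 = x" by (cases x) (simp add: zero_bic_def)
qed
end

lemma pm_sum_repr: "(r :: 'a \<Rightarrow>\<^sub>0 'b::comm_monoid_add) = (\<Sum>k\<in>ks r. sng k (lk r k))"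
  by (rule poly_mapping_eqI) (simp add: lookup_sum lookup_single when_def in_keys_iff)

lemma pm_induct[case_names zero sng add]:
  assumes "P 0" "\<And>k v. P (sng k v)" "\<And>a b. P a \<Longrightarrow> P b \<Longrightarrow> P (a + b)"
  shows "P (r :: 'a \<Rightarrow>\<^sub>0 'b::comm_monoid_add)"
proof -
  have "\<And>S. finite S \<Longrightarrow> P (\<Sum>k\<in>S. sng k (lk r k))"
  proof -
    fix S :: "'a set" assume "finite S"
    then show "P (\<Sum>k\<in>S. sng k (lk r k))"
      by (induction S rule: finite_induct) (auto intro: assms)
  qed
  then show ?thesis by (subst pm_sum_repr) simp
qed

lemma lookup_mult_fin:
  "lk (f * g) k = (\<Sum>l\<in>ks f. \<Sum>q\<in>ks g. if k = l + q then lk f l * lk g q else 0)"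
proof -
  have "lk (f * g) k = (\<Sum>l. lk f l * (\<Sum>q. lk g q when k = l + q))"
    by (rule lookup_mult)
  also have "\<dots> = (\<Sum>l\<in>ks f. lk f l * (\<Sum>q. lk g q when k = l + q))"
    by (rule Sum_any.expand_superset) (auto simp: in_keys_iff)
  also have "\<dots> = (\<Sum>l\<in>ks f. lk f l * (\<Sum>q\<in>ks g. lk g q when k = l + q))"
    by (intro sum.cong refl arg_cong[where f="\<lambda>x. _ * x"] Sum_any.expand_superset)
       (auto simp: in_keys_iff when_def)
  also have "\<dots> = (\<Sum>l\<in>ks f. \<Sum>q\<in>ks g. if k = l + q then lk f l * lk g q else 0)"
    by (simp add: sum_distrib_left when_def if_distrib cong: if_cong)
  finally show ?thesis .
qed

lemma single0_comm: "sng 0 (c::'b::comm_ring_1) * (r :: 'a::monoid_add \<Rightarrow>\<^sub>0 'b) = r * sng 0 c"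
  by (induction r rule: pm_induct) (auto simp: mult_single distrib_left distrib_right mult.commute)


type_synonym 'k R = "bic \<Rightarrow>\<^sub>0 'k"

definition mon :: "nat \<Rightarrow> nat \<Rightarrow> 'k::comm_ring_1 R" where "mon i j = sng (B i j) 1"
definition sc :: "'k::comm_ring_1 \<Rightarrow> ('m::monoid_add \<Rightarrow>\<^sub>0 'k) \<Rightarrow> ('m \<Rightarrow>\<^sub>0 'k)" where
  "sc c r = sng 0 c * r"

abbreviation "XX \<equiv> mon (Suc 0) 0"
abbreviation "YY \<equiv> mon 0 (Suc 0)"
definition EE :: "'k::comm_ring_1 R" where "EE = 1 - XX * YY"

lemma zero_bic: "(0::bic) = B 0 0" by (simp add: zero_bic_def)

lemma mon_mult: "mon i j * mon k l = (mon (i + (k - j)) (l + (j - k)) :: 'k::comm_ring_1 R)"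
  by (simp add: mon_def mult_single)

lemma mon00: "mon 0 0 = 1"
  by (simp add: mon_def zero_bic[symmetric])

lemma X_pow: "XX ^ i = mon i 0"
  by (induction i) (simp_all add: mon00 mon_mult)

lemma Y_pow: "YY ^ j = mon 0 j"
  by (induction j) (simp_all add: mon00 mon_mult power_Suc2 del: power_Suc)

lemma mon_XY: "mon i j = XX ^ i * YY ^ j"
  by (simp add: X_pow Y_pow mon_mult)

lemma YX: "YY * XX = 1"
  by (simp add: mon_mult mon00)

lemma lk_sc: "lk (sc c r) k = c * lk r k"
  by (simp add: sc_def mult_map_scale_conv_mult[symmetric] map.rep_eq when_def)

lemma sc_add: "sc c (r + s) = sc c r + sc c s" by (simp add: sc_def distrib_left)
lemma sc_diff: "sc c (r - s) = sc c r - sc c s" by (simp add: sc_def right_diff_distrib)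
lemma sc_add_left: "sc (c + d) r = sc c r + sc d r" by (simp add: sc_def single_add distrib_right)
lemma sc_sc: "sc c (sc d r) = sc (c * d) r" by (simp add: sc_def mult.assoc[symmetric] mult_single)
lemma sc_one: "sc 1 r = r" by (simp add: sc_def)
lemma sc_zero: "sc 0 r = 0" by (simp add: sc_def)
lemma sc_zero_right: "sc c 0 = 0" by (simp add: sc_def)
lemma sc_mult_left: "sc c r * s = sc c (r * s)" by (simp add: sc_def mult.assoc)
lemma sc_mult_right: "r * sc c s = sc c (r * s)"
  unfolding sc_def by (metis mult.assoc single0_comm)
lemma sc_sum: "sc c (sum f S) = (\<Sum>x\<in>S. sc c (f x))" by (simp add: sc_def sum_distrib_left)
lemma sc_sum_left: "sc (sum f S) r = (\<Sum>x\<in>S. sc (f x) r)"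
  by (induction S rule: infinite_finite_induct) (simp_all add: sc_zero sc_add_left)
lemma sng_mon: "sng (B i j) c = sc c (mon i j)"
  by (simp add: sc_def mon_def mult_single zero_bic)

lemma E_X: "EE * XX = 0"
  by (simp add: EE_def left_diff_distrib mon_mult)
lemma Y_E: "YY * EE = 0"
  by (simp add: EE_def right_diff_distrib mon_mult)
lemma E_E: "EE * EE = EE"
proof -
  have "EE * EE = EE - EE * XX * YY" by (simp add: EE_def right_diff_distrib mult.assoc)
  then show ?thesis by (simp add: E_X)
qed
lemma E_mon: "i > 0 \<Longrightarrow> EE * mon i j = 0"
proof -
  assume "i > 0"
  then have h: "mon i j = XX * mon (i - 1) j" by (simp add: mon_mult)
  have "EE * mon i j = (EE * XX) * mon (i - 1) j" by (simp only: h mult.assoc)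
  then show ?thesis by (simp add: E_X)
qed
lemma mon_E: "j > 0 \<Longrightarrow> mon i j * EE = 0"
proof -
  assume "j > 0"
  then have h: "mon i j = mon i (j - 1) * YY" by (simp add: mon_mult)
  have "mon i j * EE = mon i (j - 1) * (YY * EE)" by (simp only: h mult.assoc)
  then show ?thesis by (simp add: Y_E)
qed

lemma lk_mon: "lk (mon i j) (B a b) = (if a = i \<and> b = j then 1 else 0)"
  by (simp add: mon_def lookup_single when_def)

lemma lk_E0: "lk EE (B 0 0) = 1"
  by (simp add: EE_def lookup_minus mon_mult lk_mon mon00[symmetric])


lemma ESE: fixes s :: "'k::comm_ring_1 R" shows "EE * s * EE = sc (lk s (B 0 0)) EE"
proof (induction s rule: pm_induct)
  case zero then show ?case by (simp add: sc_zero)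
next
  case (sng k v)
  obtain i j where k: "k = B i j" by (cases k)
  show ?case
  proof (cases "i = 0 \<and> j = 0")
    case True
    then show ?thesis using k
      by (simp add: sng_mon sc_mult_left sc_mult_right mon00 E_E lk_sc lk_mon lookup_one zero_bic)
  next
    case False
    then have "EE * mon i j * EE = (0 :: 'k R)"
      by (metis E_mon mon_E mult.assoc mult_zero_left mult_zero_right neq0_conv)
    moreover have "EE * sng k v * EE = sc v (EE * mon i j * EE)"
      using k by (simp add: sng_mon sc_mult_left sc_mult_right)
    moreover have "lk (sng k v) (B 0 0) = 0" using k False by (auto simp: lookup_single)
    ultimately show ?thesis by (simp add: sc_zero sc_zero_right)
  qed
next
  case (add a b)
  then show ?case by (simp add: distrib_left distrib_right lookup_add sc_add_left)
qed


lemma lk_mult_sng_right: "lk (A * sng k c) q = (\<Sum>p\<in>ks A. if q = p + k then lk A p * c else 0)"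
proof (cases "c = 0")
  case True then show ?thesis by (simp add: sum.neutral)
next
  case False
  then have "ks (sng k c) = {k}" by simp
  then show ?thesis by (simp add: lookup_mult_fin cong: if_cong)
qed
lemma lk_mult_sng_left: "lk (sng k c * A) q = (\<Sum>p\<in>ks A. if q = k + p then c * lk A p else 0)"
proof (cases "c = 0")
  case True then show ?thesis by (simp add: sum.neutral)
next
  case False
  then have "ks (sng k c) = {k}" by simp
  then show ?thesis by (simp add: lookup_mult_fin cong: if_cong)
qed
definition ext :: "(bic \<Rightarrow> ('m::monoid_add \<Rightarrow>\<^sub>0 'k::comm_ring_1)) \<Rightarrow> 'k R \<Rightarrow> ('m \<Rightarrow>\<^sub>0 'k)" where
  "ext \<psi> r = (\<Sum>p\<in>ks r. sc (lk r p) (\<psi> p))"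

lemma ext_superset:
  assumes "finite S" "ks r \<subseteq> S"
  shows "ext \<psi> r = (\<Sum>p\<in>S. sc (lk r p) (\<psi> p))"
  unfolding ext_def
  by (rule sum.mono_neutral_left) (use assms in \<open>auto simp: in_keys_iff sc_zero\<close>)

lemma ext_add: "ext \<psi> (r + s) = ext \<psi> r + ext \<psi> s"
proof -
  let ?S = "ks r \<union> ks s"
  have "ks (r + s) \<subseteq> ?S" by (rule keys_add)
  then have "ext \<psi> (r + s) = (\<Sum>p\<in>?S. sc (lk (r + s) p) (\<psi> p))" by (intro ext_superset) auto
  also have "\<dots> = (\<Sum>p\<in>?S. sc (lk r p) (\<psi> p)) + (\<Sum>p\<in>?S. sc (lk s p) (\<psi> p))"
    by (simp add: lookup_add sc_add_left sum.distrib)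
  also have "\<dots> = ext \<psi> r + ext \<psi> s"
    by (subst (1 2) ext_superset[of ?S]) auto
  finally show ?thesis .
qed

lemma ext_zero: "ext \<psi> 0 = 0" by (simp add: ext_def)

lemma ext_sng: "ext \<psi> (sng p c) = sc c (\<psi> p)"
  by (simp add: ext_def sc_zero)

lemma ext_diff: "ext \<psi> (r - s) = ext \<psi> r - ext \<psi> s"
  by (metis add_diff_cancel diff_add_cancel ext_add)

lemma ext_sum: "ext \<psi> (sum f S) = (\<Sum>x\<in>S. ext \<psi> (f x))"
  by (induction S rule: infinite_finite_induct) (simp_all add: ext_zero ext_add)

lemma ext_sc: "ext \<psi> (sc c r) = sc c (ext \<psi> r)"
proof (induction r rule: pm_induct)
  case zero then show ?case by (simp add: sc_zero_right ext_zero)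
next
  case (sng k v)
  have "sc c (sng k v) = sng k (c * v)" by (simp add: sc_def mult_single)
  then show ?case by (simp add: ext_sng sc_sc)
next
  case (add a b) then show ?case by (simp add: sc_add ext_add)
qed

lemma ext_mult:
  assumes h: "\<And>p q. \<psi> (p + q) = \<psi> p * \<psi> q"
  shows "ext \<psi> (r * s) = ext \<psi> r * ext \<psi> s"
proof (induction r rule: pm_induct)
  case zero then show ?case by (simp add: ext_zero)
next
  case (sng k v)
  show ?case
  proof (induction s rule: pm_induct)
    case zero then show ?case by (simp add: ext_zero)
  next
    case (sng l w)
    show ?case by (simp add: mult_single ext_sng h sc_mult_left sc_mult_right sc_sc mult.commute)
  next
    case (add a b) then show ?case by (simp add: distrib_left ext_add)
  qed
next
  case (add a b) then show ?case by (simp add: distrib_right ext_add)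
qed

lemma ext_one: "\<psi> 0 = 1 \<Longrightarrow> ext \<psi> 1 = 1"
  by (metis ext_sng sc_one single_one)

fun deg :: "bic \<Rightarrow> int" where "deg (B i j) = int i - int j"

lemma deg_add: "deg (p + q) = deg p + deg q"
  by (cases p; cases q) auto

lemma deg_zero: "deg 0 = 0" by (simp add: zero_bic)

definition piL :: "'k::comm_ring_1 R \<Rightarrow> (int \<Rightarrow>\<^sub>0 'k)" where
  "piL = ext (\<lambda>p. sng (deg p) 1)"

lemma piL_mult: "piL (r * s) = piL r * piL s"
  unfolding piL_def by (rule ext_mult) (simp add: deg_add mult_single)

lemma piL_one: "piL 1 = 1"
  unfolding piL_def by (rule ext_one) (simp add: deg_zero)

lemma lk_piL: "lk (piL r) d = (\<Sum>p\<in>ks r. if deg p = d then lk r p else 0)"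
  by (simp add: piL_def ext_def lookup_sum lk_sc lookup_single when_def if_distrib cong: if_cong)

lemma max_key_mult:
  fixes a b :: "int \<Rightarrow>\<^sub>0 'k::comm_ring_1"
  assumes "a \<noteq> 0" "b \<noteq> 0"
  shows "lk (a * b) (Max (ks a) + Max (ks b)) = lk a (Max (ks a)) * lk b (Max (ks b))"
proof -
  let ?Ma = "Max (ks a)" and ?Mb = "Max (ks b)"
  have ne: "ks a \<noteq> {}" "ks b \<noteq> {}" using assms by auto
  have ma: "?Ma \<in> ks a" "?Mb \<in> ks b" using ne by auto
  have "lk (a * b) (?Ma + ?Mb) = (\<Sum>l\<in>ks a. \<Sum>q\<in>ks b. if l = ?Ma \<and> q = ?Mb then lk a l * lk b q else 0)"
    unfolding lookup_mult_fin
  proof (intro sum.cong refl)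
    fix l q assume l: "l \<in> ks a" and q: "q \<in> ks b"
    have "l \<le> ?Ma" "q \<le> ?Mb" using l q by auto
    then have "(?Ma + ?Mb = l + q) = (l = ?Ma \<and> q = ?Mb)" by auto
    then show "(if ?Ma + ?Mb = l + q then lk a l * lk b q else 0) =
               (if l = ?Ma \<and> q = ?Mb then lk a l * lk b q else 0)" by simp
  qed
  also have "\<dots> = (\<Sum>l\<in>ks a. if l = ?Ma then lk a ?Ma * lk b ?Mb else 0)"
    by (intro sum.cong refl, rename_tac l, case_tac "l = ?Ma") (use ma in \<open>simp_all add: sum.delta sum.delta'\<close>)
  also have "\<dots> = lk a ?Ma * lk b ?Mb"
    using ma by (simp add: sum.delta)
  finally show ?thesis .
qed

lemma min_key_mult:
  fixes a b :: "int \<Rightarrow>\<^sub>0 'k::comm_ring_1"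
  assumes "a \<noteq> 0" "b \<noteq> 0"
  shows "lk (a * b) (Min (ks a) + Min (ks b)) = lk a (Min (ks a)) * lk b (Min (ks b))"
proof -
  let ?Ma = "Min (ks a)" and ?Mb = "Min (ks b)"
  have ne: "ks a \<noteq> {}" "ks b \<noteq> {}" using assms by auto
  have ma: "?Ma \<in> ks a" "?Mb \<in> ks b" using ne by auto
  have "lk (a * b) (?Ma + ?Mb) = (\<Sum>l\<in>ks a. \<Sum>q\<in>ks b. if l = ?Ma \<and> q = ?Mb then lk a l * lk b q else 0)"
    unfolding lookup_mult_fin
  proof (intro sum.cong refl)
    fix l q assume l: "l \<in> ks a" and q: "q \<in> ks b"
    have "?Ma \<le> l" "?Mb \<le> q" using l q by auto
    then have "(?Ma + ?Mb = l + q) = (l = ?Ma \<and> q = ?Mb)" by auto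
    then show "(if ?Ma + ?Mb = l + q then lk a l * lk b q else 0) =
               (if l = ?Ma \<and> q = ?Mb then lk a l * lk b q else 0)" by simp
  qed
  also have "\<dots> = (\<Sum>l\<in>ks a. if l = ?Ma then lk a ?Ma * lk b ?Mb else 0)"
    by (intro sum.cong refl, rename_tac l, case_tac "l = ?Ma") (use ma in \<open>simp_all add: sum.delta sum.delta'\<close>)
  also have "\<dots> = lk a ?Ma * lk b ?Mb"
    using ma by (simp add: sum.delta)
  finally show ?thesis .
qed

lemma laurent_unit:
  fixes a b :: "int \<Rightarrow>\<^sub>0 'k::field"
  assumes ab: "a * b = 1"
  shows "\<exists>k c. a = sng k c \<and> c \<noteq> 0"
proof -
  have nz: "a \<noteq> 0" "b \<noteq> 0" using ab by auto
  have ne: "ks a \<noteq> {}" "ks b \<noteq> {}" using nz by auto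
  have lk1: "lk (1 :: int \<Rightarrow>\<^sub>0 'k) x \<noteq> 0 \<Longrightarrow> x = 0" for x
    by (simp add: lookup_one when_def split: if_splits)
  have "lk a (Max (ks a)) \<noteq> 0" "lk b (Max (ks b)) \<noteq> 0" "lk a (Min (ks a)) \<noteq> 0" "lk b (Min (ks b)) \<noteq> 0"
    using ne by (auto simp: in_keys_iff[symmetric])
  then have M: "Max (ks a) + Max (ks b) = 0" and m: "Min (ks a) + Min (ks b) = 0"
    using max_key_mult[OF nz] min_key_mult[OF nz] ab lk1 by auto
  have "Min (ks a) \<le> Max (ks a)" "Min (ks b) \<le> Max (ks b)" using ne by auto
  then have eq: "Min (ks a) = Max (ks a)" using M m by linarith
  have "ks a = {Max (ks a)}"
  proof
    show "ks a \<subseteq> {Max (ks a)}"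
    proof
      fix x assume "x \<in> ks a"
      then have "Min (ks a) \<le> x" "x \<le> Max (ks a)" by auto
      then show "x \<in> {Max (ks a)}" using eq by auto
    qed
    show "{Max (ks a)} \<subseteq> ks a" using ne by auto
  qed
  then have "a = sng (Max (ks a)) (lk a (Max (ks a)))"
  proof -
    assume h: "ks a = {Max (ks a)}"
    define M where "M = Max (ks a)"
    have hM: "ks a = {M}" using h unfolding M_def .
    have "a = (\<Sum>k\<in>ks a. sng k (lk a k))" by (rule pm_sum_repr)
    also have "\<dots> = sng M (lk a M)" by (simp only: hM) simp
    finally show ?thesis unfolding M_def .
  qed
  moreover have "lk a (Max (ks a)) \<noteq> 0" using ne by (auto simp: in_keys_iff[symmetric])
  ultimately show ?thesis by blast
qed

definition bnd :: "'k::zero R \<Rightarrow> nat \<Rightarrow> bool" where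
  "bnd r n \<longleftrightarrow> (\<forall>i j. B i j \<in> ks r \<longrightarrow> i \<le> n \<and> j \<le> n)"

lemma bnd_mono: "bnd r n \<Longrightarrow> n \<le> m \<Longrightarrow> bnd r m"
  unfolding bnd_def by force

lemma bnd_exists: "\<exists>n. bnd r n"
proof -
  let ?f = "\<lambda>p. case p of B i j \<Rightarrow> i + j"
  have "finite (?f ` ks r)" by simp
  then obtain n where "\<forall>x\<in>?f ` ks r. x \<le> n" using finite_nat_set_iff_bounded_le by blast
  then have "bnd r n" unfolding bnd_def by force
  then show ?thesis ..
qed

lemma AQ:
  fixes A :: "'k::field R"
  assumes "bnd A n"
  shows "lk (A * mon n n) (B a b) = (if b = n then lk (piL A) (int a - int n) else 0)"
proof -
  have "lk (A * mon n n) (B a b) = (\<Sum>p\<in>ks A. if B a b = p + B n n then lk A p else 0)"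
    by (simp add: lk_mult_sng_right lk_mult_sng_left mon_def cong: if_cong)
  also have "\<dots> = (\<Sum>p\<in>ks A. if b = n then (if deg p = int a - int n then lk A p else 0) else 0)"
  proof (intro sum.cong refl)
    fix p assume p: "p \<in> ks A"
    obtain i j where pij: "p = B i j" by (cases p)
    have "j \<le> n" using assms p pij unfolding bnd_def by auto
    then show "(if B a b = p + B n n then lk A p else 0) =
               (if b = n then (if deg p = int a - int n then lk A p else 0) else 0)"
      using pij by auto
  qed
  also have "\<dots> = (if b = n then lk (piL A) (int a - int n) else 0)"
    by (simp add: lk_piL)
  finally show ?thesis .
qed

lemma QA:
  fixes A :: "'k::field R"
  assumes "bnd A n"
  shows "lk (mon n n * A) (B a b) = (if a = n then lk (piL A) (int n - int b) else 0)"
proof -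
  have "lk (mon n n * A) (B a b) = (\<Sum>p\<in>ks A. if B a b = B n n + p then lk A p else 0)"
    by (simp add: lk_mult_sng_right lk_mult_sng_left mon_def cong: if_cong)
  also have "\<dots> = (\<Sum>p\<in>ks A. if a = n then (if deg p = int n - int b then lk A p else 0) else 0)"
  proof (intro sum.cong refl)
    fix p assume p: "p \<in> ks A"
    obtain i j where pij: "p = B i j" by (cases p)
    have "i \<le> n" using assms p pij unfolding bnd_def by auto
    then show "(if B a b = B n n + p then lk A p else 0) =
               (if a = n then (if deg p = int n - int b then lk A p else 0) else 0)"
      using pij by auto
  qed
  also have "\<dots> = (if a = n then lk (piL A) (int n - int b) else 0)"
    by (simp add: lk_piL)
  finally show ?thesis .
qed


definition Pp :: "nat \<Rightarrow> 'k::comm_ring_1 R" where "Pp n = 1 - mon n n"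

lemma XEY: "XX ^ a * EE * YY ^ a = mon a a - (mon (Suc a) (Suc a) :: 'k::comm_ring_1 R)"
  by (simp add: EE_def X_pow Y_pow right_diff_distrib left_diff_distrib mon_mult)

lemma Psum: "Pp n = (\<Sum>a<n. XX ^ a * EE * YY ^ a :: 'k::comm_ring_1 R)"
proof (induction n)
  case 0 then show ?case by (simp add: Pp_def mon00)
next
  case (Suc n)
  have "(\<Sum>a<Suc n. XX ^ a * EE * YY ^ a :: 'k R) = (\<Sum>a<n. XX ^ a * EE * YY ^ a) + XX ^ n * EE * YY ^ n"
    by simp
  also have "\<dots> = (1 - mon n n) + (mon n n - mon (Suc n) (Suc n))"
    using Suc.IH by (simp add: Pp_def XEY)
  also have "\<dots> = Pp (Suc n)" by (simp add: Pp_def)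
  finally show ?case by simp
qed

lemma FE: "EE * (YY ^ c * (XX ^ d * EE)) = (if c = d then EE else (0 :: 'k::comm_ring_1 R))"
proof -
  have "EE * (YY ^ c * (XX ^ d * EE)) = EE * (YY ^ c * XX ^ d) * EE" by (simp add: mult.assoc)
  also have "\<dots> = sc (lk (YY ^ c * XX ^ d :: 'k R) (B 0 0)) EE" by (rule ESE)
  also have "\<dots> = (if c = d then EE else 0)"
    by (auto simp: X_pow Y_pow mon_mult lk_mon sc_one sc_zero)
  finally show ?thesis .
qed

lemma E_E': "EE * (EE * z) = EE * (z :: 'k::comm_ring_1 R)"
  by (simp add: mult.assoc[symmetric] E_E)

lemma sc_E_mult: "sc x EE * sc y EE = sc (x * y) (EE :: 'k::comm_ring_1 R)"
  by (simp add: sc_mult_left sc_mult_right sc_sc E_E mult.commute)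

lemma sc_E_inj: "sc x (EE :: 'k::comm_ring_1 R) = sc y EE \<Longrightarrow> x = y"
proof -
  assume "sc x (EE :: 'k R) = sc y EE"
  then have "lk (sc x (EE :: 'k R)) (B 0 0) = lk (sc y EE) (B 0 0)" by simp
  then show "x = y" by (simp add: lk_sc lk_E0)
qed

lemma unit_form:
  fixes A Bm :: "'k::field_char_0 R"
  assumes AB: "A * Bm = 1" and BA: "Bm * A = 1"
  shows "\<exists>lm n. A * mon n n = sc lm (mon n n) \<and> mon n n * A = sc lm (mon n n)"
proof -
  have "piL A * piL Bm = 1" using AB by (simp add: piL_mult[symmetric] piL_one)
  then obtain k lm where pA: "piL A = sng k lm" and l0: "lm \<noteq> 0" using laurent_unit by blast
  have "piL Bm * piL A = 1" using BA by (simp add: piL_mult[symmetric] piL_one)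
  then obtain k' \<mu> where pB: "piL Bm = sng k' \<mu>" using laurent_unit by blast
  have prod: "sng (k' + k) (\<mu> * lm) = (1 :: int \<Rightarrow>\<^sub>0 'k)"
    using \<open>piL Bm * piL A = 1\<close> by (simp add: pA pB mult_single)
  then have h0: "lk (sng (k' + k) (\<mu> * lm)) 0 = (1::'k)" by simp
  then have kk: "k' + k = 0" by (auto simp: lookup_single when_def split: if_splits)
  then have ml: "\<mu> * lm = 1" using h0 by simp
  obtain n1 where n1: "bnd A n1" using bnd_exists by blast
  obtain n2 where n2: "bnd Bm n2" using bnd_exists by blast
  define n where "n = max n1 (max n2 (nat \<bar>k\<bar>))"
  have bA: "bnd A n" using bnd_mono[OF n1, of n] n_def by auto
  have bB: "bnd Bm n" using bnd_mono[OF n2, of n] n_def by auto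
  have nk: "int n + k \<ge> 0" "int n - k \<ge> 0" unfolding n_def by auto
  define m where "m = nat (int n + k)"
  have m_int: "int m = int n + k" using nk unfolding m_def by simp
  have AQn: "A * mon n n = sc lm (mon m n)"
  proof (rule poly_mapping_eqI)
    fix q obtain a b where q: "q = B a b" by (cases q)
    show "lk (A * mon n n) q = lk (sc lm (mon m n)) q"
      unfolding q AQ[OF bA] pA lk_sc lk_mon using m_int by (auto simp: lookup_single when_def)
  qed
  have QnB: "mon n n * Bm = sc \<mu> (mon n m)"
  proof (rule poly_mapping_eqI)
    fix q obtain a b where q: "q = B a b" by (cases q)
    show "lk (mon n n * Bm) q = lk (sc \<mu> (mon n m)) q"
      unfolding q QA[OF bB] pB lk_sc lk_mon using m_int kk by (auto simp: lookup_single when_def)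
  qed
  have Qidem: "mon n n * mon n n = (mon n n :: 'k R)" by (simp add: mon_mult)
  have AQB: "A * mon n n * Bm = mon m m"
  proof -
    have "A * mon n n * Bm = (A * mon n n) * (mon n n * Bm)"
      by (metis Qidem mult.assoc)
    also have "\<dots> = sc (\<mu> * lm) (mon m n * mon n m)"
      by (simp add: AQn QnB sc_mult_left sc_mult_right sc_sc)
    also have "\<dots> = mon m m" using ml by (simp add: mon_mult sc_one)
    finally show ?thesis .
  qed
  have APB: "A * Pp n * Bm = Pp m"
    by (simp add: Pp_def right_diff_distrib left_diff_distrib AB AQB)
  define u where "u a = A * (XX ^ a * EE)" for a
  define w where "w a = EE * (YY ^ a * Bm)" for a
  define e where "e c = (XX ^ c * EE :: 'k R)" for c
  define f where "f c = (EE * YY ^ c :: 'k R)" for c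
  have BA': "Bm * (A * z) = z" for z by (simp add: mult.assoc[symmetric] BA)
  have wu: "w a * u b = (if a = b then EE else 0)" for a b
    by (simp add: w_def u_def mult.assoc BA' FE)
  have fe: "f c * e d = (if c = d then EE else 0)" for c d
    by (simp add: f_def e_def mult.assoc FE)
  have uw: "u a * w a = A * (XX ^ a * EE * YY ^ a) * Bm" for a
    by (simp add: u_def w_def mult.assoc E_E')
  have sum_uw: "(\<Sum>a<n. u a * w a) = Pp m"
    by (simp add: uw sum_distrib_left[symmetric] sum_distrib_right[symmetric] Psum[symmetric] APB)
  have sum_ef: "(\<Sum>c<m. e c * f c) = Pp m"
    by (simp add: e_def f_def Psum mult.assoc E_E')
  have uE: "u b * EE = u b" for b by (simp add: u_def mult.assoc E_E)
  have Ew: "EE * w a = w a" for a by (simp add: w_def mult.assoc[symmetric] E_E)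
  have eE: "e b * EE = e b" for b by (simp add: e_def mult.assoc E_E)
  have Ef: "EE * f a = f a" for a by (simp add: f_def mult.assoc[symmetric] E_E)
  have Pu: "Pp m * u b = u b" if "b < n" for b
  proof -
    have "Pp m * u b = (\<Sum>a<n. u a * (w a * u b))" by (simp add: sum_uw[symmetric] sum_distrib_right mult.assoc)
    also have "\<dots> = (\<Sum>a<n. if a = b then u b * EE else 0)" by (intro sum.cong refl) (simp add: wu)
    also have "\<dots> = u b" using that by (simp add: uE)
    finally show ?thesis .
  qed
  have wP: "w a * Pp m = w a" if "a < n" for a
  proof -
    have "w a * Pp m = (\<Sum>b<n. (w a * u b) * w b)" by (simp add: sum_uw[symmetric] sum_distrib_left mult.assoc)
    also have "\<dots> = (\<Sum>b<n. if a = b then EE * w a else 0)" by (intro sum.cong refl) (simp add: wu)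
    also have "\<dots> = w a" using that by (simp add: Ew)
    finally show ?thesis .
  qed
  have Pe: "Pp m * e d = e d" if "d < m" for d
  proof -
    have "Pp m * e d = (\<Sum>c<m. e c * (f c * e d))" by (simp add: sum_ef[symmetric] sum_distrib_right mult.assoc)
    also have "\<dots> = (\<Sum>c<m. if c = d then e d * EE else 0)" by (intro sum.cong refl) (simp add: fe)
    also have "\<dots> = e d" using that by (simp add: eE)
    finally show ?thesis .
  qed
  have fP: "f c * Pp m = f c" if "c < m" for c
  proof -
    have "f c * Pp m = (\<Sum>d<m. (f c * e d) * f d)" by (simp add: sum_ef[symmetric] sum_distrib_left mult.assoc)
    also have "\<dots> = (\<Sum>d<m. if c = d then EE * f c else 0)" by (intro sum.cong refl) (simp add: fe)
    also have "\<dots> = f c" using that by (simp add: Ef)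
    finally show ?thesis .
  qed
  define \<alpha> where "\<alpha> c a = lk (YY ^ c * A * XX ^ a :: 'k R) (B 0 0)" for c a
  define \<beta> where "\<beta> a c = lk (YY ^ a * Bm * XX ^ c :: 'k R) (B 0 0)" for a c
  have fu: "f c * u a = sc (\<alpha> c a) EE" for c a
  proof -
    have "f c * u a = EE * (YY ^ c * A * XX ^ a) * EE" by (simp add: f_def u_def mult.assoc)
    then show ?thesis by (simp add: ESE \<alpha>_def)
  qed
  have we: "w a * e c = sc (\<beta> a c) EE" for c a
  proof -
    have "w a * e c = EE * (YY ^ a * Bm * XX ^ c) * EE" by (simp add: w_def e_def mult.assoc)
    then show ?thesis by (simp add: ESE \<beta>_def)
  qed
  have row: "(\<Sum>c<m. \<beta> a c * \<alpha> c a) = 1" if "a < n" for a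
  proof -
    have "sc (\<Sum>c<m. \<beta> a c * \<alpha> c a) EE = (\<Sum>c<m. (w a * e c) * (f c * u a))"
      by (simp add: sc_sum_left we fu sc_E_mult)
    also have "\<dots> = w a * (\<Sum>c<m. e c * f c) * u a"
      by (simp add: sum_distrib_left sum_distrib_right mult.assoc)
    also have "\<dots> = EE" using that by (simp add: sum_ef wP wu)
    finally have "sc (\<Sum>c<m. \<beta> a c * \<alpha> c a) EE = sc 1 (EE :: 'k R)" by (simp add: sc_one)
    then show ?thesis by (rule sc_E_inj)
  qed
  have col: "(\<Sum>a<n. \<alpha> c a * \<beta> a c) = 1" if "c < m" for c
  proof -
    have "sc (\<Sum>a<n. \<alpha> c a * \<beta> a c) EE = (\<Sum>a<n. (f c * u a) * (w a * e c))"
      by (simp add: sc_sum_left we fu sc_E_mult)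
    also have "\<dots> = f c * (\<Sum>a<n. u a * w a) * e c"
      by (simp add: sum_distrib_left sum_distrib_right mult.assoc)
    also have "\<dots> = EE" using that by (simp add: sum_uw fP fe)
    finally have "sc (\<Sum>a<n. \<alpha> c a * \<beta> a c) EE = sc 1 (EE :: 'k R)" by (simp add: sc_one)
    then show ?thesis by (rule sc_E_inj)
  qed
  have "(of_nat n :: 'k) = (\<Sum>a<n. \<Sum>c<m. \<beta> a c * \<alpha> c a)" by (simp add: row)
  also have "\<dots> = (\<Sum>c<m. \<Sum>a<n. \<alpha> c a * \<beta> a c)" by (subst sum.swap) (simp add: mult.commute)
  also have "\<dots> = of_nat m" by (simp add: col)
  finally have "n = m" by simp
  then have k0: "k = 0" using m_int by simp
  have "m = n" using \<open>n = m\<close> by simp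
  have AQ': "A * mon n n = sc lm (mon n n)" using AQn \<open>m = n\<close> by simp
  have QA': "mon n n * A = sc lm (mon n n)"
  proof (rule poly_mapping_eqI)
    fix q obtain a b where q: "q = B a b" by (cases q)
    show "lk (mon n n * A) q = lk (sc lm (mon n n)) q"
      unfolding q QA[OF bA] pA lk_sc lk_mon using k0 by (auto simp: lookup_single when_def)
  qed
  show ?thesis using AQ' QA' by blast
qed


lemma sng_sc: "sng p c = sc c (sng p 1 :: 'k::comm_ring_1 R)"
  by (simp add: sc_def mult_single)

definition rhom :: "('k::comm_ring_1 R \<Rightarrow> 'k R) \<Rightarrow> bool" where
  "rhom \<Phi> \<longleftrightarrow> (\<forall>r s. \<Phi> (r + s) = \<Phi> r + \<Phi> s) \<and> (\<forall>r s. \<Phi> (r * s) = \<Phi> r * \<Phi> s)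
     \<and> \<Phi> 1 = 1 \<and> (\<forall>c r. \<Phi> (sc c r) = sc c (\<Phi> r))"

context
  fixes \<Phi> :: "'k::comm_ring_1 R \<Rightarrow> 'k R"
  assumes h: "rhom \<Phi>"
begin

lemma rh_add: "\<Phi> (r + s) = \<Phi> r + \<Phi> s" using h unfolding rhom_def by blast
lemma rh_mult: "\<Phi> (r * s) = \<Phi> r * \<Phi> s" using h unfolding rhom_def by blast
lemma rh_one: "\<Phi> 1 = 1" using h unfolding rhom_def by blast
lemma rh_sc: "\<Phi> (sc c r) = sc c (\<Phi> r)" using h unfolding rhom_def by blast
lemma rh_zero: "\<Phi> 0 = 0" by (metis add_cancel_right_right add_0 rh_add)
lemma rh_diff: "\<Phi> (r - s) = \<Phi> r - \<Phi> s" by (metis add_diff_cancel diff_add_cancel rh_add)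
lemma rh_sum: "\<Phi> (sum f S) = (\<Sum>x\<in>S. \<Phi> (f x))"
  by (induction S rule: infinite_finite_induct) (simp_all add: rh_zero rh_add)
lemma rh_pow: "\<Phi> (x ^ n) = \<Phi> x ^ n"
  by (induction n) (simp_all add: rh_one rh_mult)
lemma rh_repr: "\<Phi> r = (\<Sum>p\<in>ks r. sc (lk r p) (\<Phi> (sng p 1)))"
proof -
  have "\<Phi> r = \<Phi> (\<Sum>p\<in>ks r. sng p (lk r p))" by (rule arg_cong[where f=\<Phi>, OF pm_sum_repr])
  also have "\<dots> = (\<Sum>p\<in>ks r. \<Phi> (sng p (lk r p)))" by (rule rh_sum)
  also have "\<dots> = (\<Sum>p\<in>ks r. sc (lk r p) (\<Phi> (sng p 1)))"
    by (intro sum.cong refl) (subst sng_sc, rule rh_sc)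
  finally show ?thesis .
qed
lemma rh_mon: "\<Phi> (mon i j) = \<Phi> XX ^ i * \<Phi> YY ^ j"
  unfolding mon_XY[of i j] by (simp only: rh_mult rh_pow)

end

lemma ext_mon: "mon a b * t * mon c d = ext (\<lambda>p. sng (B a b + p + B c d) 1) (t :: 'k::comm_ring_1 R)"
proof (induction t rule: pm_induct)
  case zero then show ?case by (simp add: ext_zero)
next
  case (sng k v) then show ?case by (simp add: mon_def mult_single ext_sng sc_def)
next
  case (add a b) then show ?case by (simp add: distrib_left distrib_right ext_add)
qed

lemma lk_ext_sng: "lk (ext (\<lambda>p. sng (K p) 1) t) q = (\<Sum>p\<in>ks t. if K p = q then lk t p else (0::'k::comm_ring_1))"
  by (simp add: ext_def lookup_sum lk_sc lookup_single when_def if_distrib cong: if_cong)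

lemma nonzero_witness:
  fixes t :: "'k::comm_ring_1 R"
  assumes "t \<noteq> 0"
  shows "\<exists>l m. lk (YY ^ l * t * XX ^ m) (B 0 0) \<noteq> 0"
proof -
  define J where "J = {j. \<exists>i. B i j \<in> ks t}"
  have "ks t \<noteq> {}" using assms by simp
  then obtain p where p: "p \<in> ks t" by blast
  obtain i0 j0 where "p = B i0 j0" by (cases p)
  then have "j0 \<in> J" using p J_def by auto
  define m where "m = Min J"
  have finJ: "finite J"
  proof -
    have "J \<subseteq> (\<lambda>p. case p of B i j \<Rightarrow> j) ` ks t" unfolding J_def by force
    then show ?thesis by (rule finite_subset) simp
  qed
  have "m \<in> J" unfolding m_def using finJ \<open>j0 \<in> J\<close> by (auto intro: Min_in)
  then obtain l where l: "B l m \<in> ks t" unfolding J_def by auto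
  have mle: "B i j \<in> ks t \<Longrightarrow> m \<le> j" for i j
  proof -
    assume "B i j \<in> ks t"
    then have "j \<in> J" unfolding J_def by auto
    then show "m \<le> j" unfolding m_def using finJ by simp
  qed
  have "lk (YY ^ l * t * XX ^ m) (B 0 0) = (\<Sum>p\<in>ks t. if B 0 l + p + B m 0 = B 0 0 then lk t p else 0)"
    by (simp add: X_pow Y_pow ext_mon lk_ext_sng)
  also have "\<dots> = (\<Sum>p\<in>ks t. if p = B l m then lk t p else 0)"
  proof (intro sum.cong refl)
    fix p assume pk: "p \<in> ks t"
    obtain i j where pij: "p = B i j" by (cases p)
    have "m \<le> j" using mle pk pij by auto
    then have "(B 0 l + p + B m 0 = B 0 0) = (p = B l m)" using pij by auto
    then show "(if B 0 l + p + B m 0 = B 0 0 then lk t p else 0) = (if p = B l m then lk t p else 0)"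
      by simp
  qed
  also have "\<dots> = lk t (B l m)" using l by (simp add: sum.delta')
  finally have "lk (YY ^ l * t * XX ^ m) (B 0 0) \<noteq> 0" using l by (simp add: in_keys_iff)
  then show ?thesis by blast
qed

lemma rh_induct:
  assumes h: "rhom \<Phi>" and P1: "\<And>p. P (\<Phi> (sng p 1))" and P0: "P 0"
    and Padd: "\<And>x y. P x \<Longrightarrow> P y \<Longrightarrow> P (x + y)" and Psc: "\<And>c x. P x \<Longrightarrow> P (sc c x)"
  shows "P (\<Phi> r)"
proof -
  have "\<And>S. finite S \<Longrightarrow> P (\<Sum>p\<in>S. sc (lk r p) (\<Phi> (sng p 1)))"
  proof -
    fix S :: "bic set" assume "finite S"
    then show "P (\<Sum>p\<in>S. sc (lk r p) (\<Phi> (sng p 1)))"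
      by (induction S rule: finite_induct) (auto intro: P0 Padd Psc P1)
  qed
  then show ?thesis by (simp add: rh_repr[OF h, of r])
qed

lemma kill_E:
  fixes \<Phi> :: "'k::field R \<Rightarrow> 'k R"
  assumes h: "rhom \<Phi>" and t0: "\<Phi> t = 0" and tn: "t \<noteq> 0"
  shows "\<Phi> EE = 0"
proof -
  obtain l m where c: "lk (YY ^ l * t * XX ^ m) (B 0 0) \<noteq> 0" using nonzero_witness[OF tn] by blast
  define c where "c = lk (YY ^ l * t * XX ^ m) (B 0 0)"
  have "\<Phi> (EE * (YY ^ l * t * XX ^ m) * EE) = \<Phi> EE * (\<Phi> (YY ^ l) * \<Phi> t * \<Phi> (XX ^ m)) * \<Phi> EE"
    by (simp add: rh_mult[OF h])
  also have "\<dots> = 0" by (simp add: t0)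
  finally have "\<Phi> (sc c EE) = 0" by (simp add: ESE c_def)
  then have "sc c (\<Phi> EE) = 0" by (simp add: rh_sc[OF h])
  then have "sc (inverse c) (sc c (\<Phi> EE)) = 0" by (simp add: sc_zero_right)
  then show ?thesis using c by (simp add: sc_sc c_def sc_one)
qed

lemma inv_pair:
  assumes h: "rhom \<Phi>" and e: "\<Phi> EE = 0"
  shows "\<Phi> XX * \<Phi> YY = 1" "\<Phi> YY * \<Phi> XX = 1"
proof -
  have "\<Phi> EE = 1 - \<Phi> XX * \<Phi> YY" by (simp add: EE_def rh_diff[OF h] rh_one[OF h] rh_mult[OF h])
  then show "\<Phi> XX * \<Phi> YY = 1" using e by simp
  show "\<Phi> YY * \<Phi> XX = 1" by (simp add: rh_mult[OF h, symmetric] YX rh_one[OF h])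
qed

definition Gs :: "nat \<Rightarrow> 'k::comm_ring_1 R \<Rightarrow> bool" where
  "Gs n g \<longleftrightarrow> g * mon n n = 0 \<and> mon n n * g = 0"

definition Ws :: "nat \<Rightarrow> 'k::comm_ring_1 R \<Rightarrow> bool" where
  "Ws n v \<longleftrightarrow> (\<exists>c g. v = sc c 1 + g \<and> Gs n g)"

lemma Gs_zero: "Gs n 0" by (simp add: Gs_def)
lemma Gs_add: "Gs n g \<Longrightarrow> Gs n h \<Longrightarrow> Gs n (g + h)" by (simp add: Gs_def distrib_left distrib_right)
lemma Gs_sc: "Gs n g \<Longrightarrow> Gs n (sc c g)" by (simp add: Gs_def sc_mult_left sc_mult_right sc_zero_right)
lemma Gs_mult: "Gs n g \<Longrightarrow> Gs n h \<Longrightarrow> Gs n (g * h)" by (simp add: Gs_def mult.assoc)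
  (metis mult.assoc mult_zero_left)
lemma Gs_mono: "Gs n g \<Longrightarrow> n \<le> n' \<Longrightarrow> Gs n' g"
proof -
  assume g: "Gs n g" and nn: "n \<le> n'"
  have "mon n' n' = mon n n * mon n' n'" "mon n' n' = mon n' n' * mon n n" using nn by (simp_all add: mon_mult)
  then show "Gs n' g" using g unfolding Gs_def by (metis mult.assoc mult_zero_left mult_zero_right)
qed

lemma Ws_one: "Ws n 1" unfolding Ws_def by (rule exI[of _ 1], rule exI[of _ 0]) (simp add: sc_one Gs_zero)
lemma Ws_zero: "Ws n 0" unfolding Ws_def by (rule exI[of _ 0], rule exI[of _ 0]) (simp add: sc_zero Gs_zero)
lemma Ws_add: "Ws n x \<Longrightarrow> Ws n y \<Longrightarrow> Ws n (x + y)"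
  unfolding Ws_def
proof (elim exE conjE)
  fix c g d h assume "x = sc c 1 + g" "Gs n g" "y = sc d 1 + h" "Gs n h"
  then show "\<exists>e k. x + y = sc e 1 + k \<and> Gs n k"
    by (intro exI[of _ "c + d"] exI[of _ "g + h"]) (simp add: sc_add_left Gs_add algebra_simps)
qed
lemma Ws_sc: "Ws n x \<Longrightarrow> Ws n (sc e x)"
  unfolding Ws_def
proof (elim exE conjE)
  fix c g assume "x = sc c 1 + g" "Gs n g"
  then show "\<exists>d k. sc e x = sc d 1 + k \<and> Gs n k"
    by (intro exI[of _ "e * c"] exI[of _ "sc e g"]) (simp add: sc_add sc_sc Gs_sc)
qed
lemma Ws_mult: "Ws n x \<Longrightarrow> Ws n y \<Longrightarrow> Ws n (x * y)"
  unfolding Ws_def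
proof (elim exE conjE)
  fix c g d h assume x: "x = sc c 1 + g" and g: "Gs n g" and y: "y = sc d 1 + h" and hh: "Gs n h"
  have "x * y = sc (c * d) 1 + (sc c h + sc d g + g * h)"
    unfolding x y by (simp add: distrib_left distrib_right sc_mult_left sc_mult_right sc_sc sc_add mult.commute[of d c] add_ac)
  moreover have "Gs n (sc c h + sc d g + g * h)" using g hh by (intro Gs_add Gs_sc Gs_mult)
  ultimately show "\<exists>e k. x * y = sc e 1 + k \<and> Gs n k" by blast
qed
lemma Ws_pow: "Ws n x \<Longrightarrow> Ws n (x ^ i)"
  by (induction i) (simp_all add: Ws_one Ws_mult)
lemma Ws_mono: "Ws n x \<Longrightarrow> n \<le> n' \<Longrightarrow> Ws n' x"
  unfolding Ws_def using Gs_mono by blast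

lemma Gs_repr:
  fixes g :: "'k::comm_ring_1 R"
  assumes "Gs n g"
  shows "g = (\<Sum>a<n. \<Sum>b<n. sc (lk (YY ^ a * g * XX ^ b) (B 0 0)) (XX ^ a * EE * YY ^ b))"
proof -
  have "Pp n * g * Pp n = g" using assms
    by (simp add: Pp_def Gs_def left_diff_distrib right_diff_distrib mult.assoc)
  then have "g = (\<Sum>a<n. XX ^ a * EE * YY ^ a) * g * (\<Sum>b<n. XX ^ b * EE * YY ^ b)"
    by (simp add: Psum)
  also have "\<dots> = (\<Sum>a<n. \<Sum>b<n. (XX ^ a * EE * YY ^ a) * g * (XX ^ b * EE * YY ^ b))"
    by (simp only: sum_distrib_right sum_distrib_left) (rule sum.swap)
  also have "\<dots> = (\<Sum>a<n. \<Sum>b<n. sc (lk (YY ^ a * g * XX ^ b) (B 0 0)) (XX ^ a * EE * YY ^ b))"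
  proof (intro sum.cong refl)
    fix a b
    have "(XX ^ a * EE * YY ^ a) * g * (XX ^ b * EE * YY ^ b) = XX ^ a * (EE * (YY ^ a * g * XX ^ b) * EE) * YY ^ b"
      by (simp add: mult.assoc)
    also have "\<dots> = sc (lk (YY ^ a * g * XX ^ b) (B 0 0)) (XX ^ a * EE * YY ^ b)"
      by (simp add: ESE sc_mult_left sc_mult_right)
    finally show "(XX ^ a * EE * YY ^ a) * g * (XX ^ b * EE * YY ^ b) =
       sc (lk (YY ^ a * g * XX ^ b) (B 0 0)) (XX ^ a * EE * YY ^ b)" .
  qed
  finally show ?thesis .
qed

lemma vsR: "vector_space (sc :: 'k::field \<Rightarrow> 'k R \<Rightarrow> 'k R)"
  by unfold_locales (simp_all add: sc_add sc_add_left sc_sc sc_one)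


lemma comm_pow: "x * a = a * x \<Longrightarrow> x * a ^ i = a ^ i * (x :: 'a::monoid_mult)"
proof (induction i)
  case 0 then show ?case by simp
next
  case (Suc i)
  have "x * a ^ Suc i = (x * a ^ i) * a" by (simp only: power_Suc2 mult.assoc)
  also have "\<dots> = a ^ i * (x * a)" using Suc by (simp add: mult.assoc)
  also have "\<dots> = a ^ Suc i * x" using Suc by (simp only: power_Suc2 mult.assoc)
  finally show ?case .
qed

theorem part1R:
  fixes \<Phi> :: "'k::field_char_0 R \<Rightarrow> 'k R"
  assumes h: "rhom \<Phi>"
  shows "inj \<Phi> \<or> ((\<forall>x\<in>range \<Phi>. \<forall>y\<in>range \<Phi>. x * y = y * x) \<and>
           (\<exists>Bs. finite Bs \<and> Bs \<subseteq> range \<Phi> \<and> (\<forall>v\<in>range \<Phi>. \<exists>a. v = (\<Sum>b\<in>Bs. sc (a b) b))))"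
proof (cases "inj \<Phi>")
  case True then show ?thesis by blast
next
  case False
  then obtain r s where rs: "r \<noteq> s" "\<Phi> r = \<Phi> s" unfolding inj_def by blast
  have t0: "\<Phi> (r - s) = 0" using rs by (simp add: rh_diff[OF h])
  have tn: "r - s \<noteq> 0" using rs by simp
  have E0: "\<Phi> EE = 0" by (rule kill_E[OF h t0 tn])
  define A where "A = \<Phi> XX"
  define Bm where "Bm = \<Phi> YY"
  have AB: "A * Bm = 1" and BA: "Bm * A = 1" using inv_pair[OF h E0] unfolding A_def Bm_def by auto
  have WsA: "\<exists>n. Ws n A" if h1: "A * Bm = 1" and h2: "Bm * A = 1" for A Bm :: "'k R"
  proof -
    obtain l n where l: "A * mon n n = sc l (mon n n)" "mon n n * A = sc l (mon n n)"
      using unit_form[OF h1 h2] by blast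
    have "Gs n (A - sc l 1)" unfolding Gs_def
      using l by (simp add: left_diff_distrib right_diff_distrib sc_mult_left sc_mult_right)
    moreover have "A = sc l 1 + (A - sc l 1)" by simp
    ultimately show ?thesis unfolding Ws_def by blast
  qed
  obtain n1 where n1: "Ws n1 A" using WsA[OF AB BA] by blast
  obtain n2 where n2: "Ws n2 Bm" using WsA[OF BA AB] by blast
  define n where "n = max n1 n2"
  have WA: "Ws n A" using Ws_mono[OF n1] n_def by simp
  have WB: "Ws n Bm" using Ws_mono[OF n2] n_def by simp
  have img: "\<Phi> (sng p 1) = A ^ i * Bm ^ j" if "p = B i j" for p i j
  proof -
    have "sng p 1 = (mon i j :: 'k R)" by (simp only: that mon_def)
    moreover have "\<Phi> (mon i j) = A ^ i * Bm ^ j" unfolding A_def Bm_def by (rule rh_mon[OF h])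
    ultimately show ?thesis by simp
  qed
  have Wall: "Ws n (\<Phi> r)" for r
  proof (rule rh_induct[OF h])
    fix p obtain i j where "p = B i j" by (cases p)
    then show "Ws n (\<Phi> (sng p 1))" using img WA WB by (simp add: Ws_mult Ws_pow)
  qed (simp_all add: Ws_zero Ws_add Ws_sc)
  have ABc: "A * Bm = Bm * A" using AB BA by simp
  have CCmon: "z * (A ^ i * Bm ^ j) = (A ^ i * Bm ^ j) * z" if "z * A = A * z" "z * Bm = Bm * z" for z i j
  proof -
    have "z * (A ^ i * Bm ^ j) = (A ^ i * z) * Bm ^ j" using comm_pow[OF that(1)] by (simp add: mult.assoc[symmetric])
    also have "\<dots> = A ^ i * (Bm ^ j * z)" using comm_pow[OF that(2)] by (simp add: mult.assoc)
    finally show ?thesis by (simp add: mult.assoc)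
  qed
  have CC: "\<Phi> r * A = A * \<Phi> r \<and> \<Phi> r * Bm = Bm * \<Phi> r" for r
  proof (rule rh_induct[OF h])
    fix p obtain i j where p: "p = B i j" by (cases p)
    have "A * (A ^ i * Bm ^ j) = (A ^ i * Bm ^ j) * A"
      using CCmon[of A i j] ABc by simp
    moreover have "Bm * (A ^ i * Bm ^ j) = (A ^ i * Bm ^ j) * Bm"
      using CCmon[of Bm i j] ABc by simp
    ultimately show "\<Phi> (sng p 1) * A = A * \<Phi> (sng p 1) \<and> \<Phi> (sng p 1) * Bm = Bm * \<Phi> (sng p 1)"
      using img[OF p] by simp
  qed (auto simp: distrib_left distrib_right sc_mult_left sc_mult_right)
  have comm: "x * y = y * x" if hx: "x \<in> range \<Phi>" and hy: "y \<in> range \<Phi>" for x y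
  proof -
    obtain r' where x: "x = \<Phi> r'" using hx by blast
    obtain s' where y: "y = \<Phi> s'" using hy by blast
    have "x * \<Phi> s' = \<Phi> s' * x"
    proof (rule rh_induct[OF h])
      fix p obtain i j where p: "p = B i j" by (cases p)
      show "x * \<Phi> (sng p 1) = \<Phi> (sng p 1) * x"
        using img[OF p] CCmon CC x by simp
    qed (auto simp: distrib_left distrib_right sc_mult_left sc_mult_right)
    then show ?thesis using y by simp
  qed
  interpret V: vector_space "sc :: 'k \<Rightarrow> 'k R \<Rightarrow> 'k R" by (rule vsR)
  define S where "S = insert (1 :: 'k R) ((\<lambda>(a, b). XX ^ a * EE * YY ^ b) ` ({..<n} \<times> {..<n}))"
  have finS: "finite S" unfolding S_def by simp
  have inspan: "v \<in> V.span S" if hv: "Ws n v" for v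
  proof -
    obtain c g where v: "v = sc c 1 + g" and g: "Gs n g" using hv unfolding Ws_def by blast
    have "sc c 1 \<in> V.span S" unfolding S_def by (intro V.span_scale V.span_base) simp
    moreover have "g \<in> V.span S"
    proof -
      have "(\<Sum>a<n. \<Sum>b<n. sc (lk (YY ^ a * g * XX ^ b) (B 0 0)) (XX ^ a * EE * YY ^ b)) \<in> V.span S"
        by (intro V.span_sum V.span_scale V.span_base) (auto simp: S_def)
      then show ?thesis using Gs_repr[OF g] by simp
    qed
    ultimately show ?thesis unfolding v by (rule V.span_add)
  qed
  have rsub: "range \<Phi> \<subseteq> V.span S" using inspan Wall by blast
  obtain Bs where Bs: "Bs \<subseteq> range \<Phi>" "V.independent Bs" "range \<Phi> \<subseteq> V.span Bs"
    using V.maximal_independent_subset[of "range \<Phi>"] by blast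
  have finB: "finite Bs" using V.independent_span_bound[OF finS Bs(2)] Bs(1) rsub by blast
  have "\<forall>v\<in>range \<Phi>. \<exists>a. v = (\<Sum>b\<in>Bs. sc (a b) b)"
    using Bs(3) V.span_finite[OF finB] by blast
  then show ?thesis using comm finB Bs(1) by blast
qed


lemma XEYg: "XX ^ a * EE * YY ^ b = mon a b - (mon (Suc a) (Suc b) :: 'k::comm_ring_1 R)"
  by (simp add: EE_def X_pow Y_pow right_diff_distrib left_diff_distrib mon_mult)

lemma XEY_split: "XX ^ a * EE * YY ^ b = (XX ^ a * EE) * (EE * YY ^ b :: 'k::comm_ring_1 R)"
  by (simp add: mult.assoc E_E')

definition Cm :: "nat \<Rightarrow> nat \<Rightarrow> 'k::comm_ring_1 R" where
  "Cm d m = (\<Sum>i<d. XX ^ ((i + m) mod d) * EE * YY ^ i) + mon d d"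

lemma fQ: fixes d :: nat shows "i < d \<Longrightarrow> (EE * YY ^ i) * mon d d = (0 :: 'k::comm_ring_1 R)"
proof -
  assume "i < d"
  then have "YY ^ i * mon d d = (mon (d - i) d :: 'k R)" by (simp add: Y_pow mon_mult)
  then have "(EE * YY ^ i) * mon d d = EE * (mon (d - i) d :: 'k R)" by (simp add: mult.assoc)
  moreover have "EE * (mon (d - i) d :: 'k R) = 0" using \<open>i < d\<close> by (intro E_mon) simp
  ultimately show ?thesis by simp
qed

lemma Qe: fixes d :: nat shows "a < d \<Longrightarrow> mon d d * (XX ^ a * EE) = (0 :: 'k::comm_ring_1 R)"
proof -
  assume "a < d"
  then have "mon d d * XX ^ a = (mon d (d - a) :: 'k R)" by (simp add: X_pow mon_mult)
  then have "mon d d * (XX ^ a * EE) = mon d (d - a) * (EE :: 'k R)" by (simp add: mult.assoc[symmetric])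
  moreover have "(mon d (d - a) :: 'k R) * EE = 0" using \<open>a < d\<close> by (intro mon_E) simp
  ultimately show ?thesis by simp
qed

lemma fe': "(EE * YY ^ c) * (XX ^ a * EE) = (if c = a then EE else (0 :: 'k::comm_ring_1 R))"
  by (simp add: mult.assoc FE)

lemma Cm_mult:
  assumes d: "d > 0"
  shows "Cm d m * Cm d m' = (Cm d (m + m') :: 'k::comm_ring_1 R)"
proof -
  define u where "u a = (XX ^ a * EE :: 'k R)" for a
  define v where "v b = (EE * YY ^ b :: 'k R)" for b
  define Q where "Q = (mon d d :: 'k R)"
  have Cm_uv: "Cm d k = (\<Sum>i<d. u ((i + k) mod d) * v i) + Q" for k
    unfolding Cm_def u_def v_def Q_def by (simp add: XEY_split)
  have vu: "v c * u a = (if c = a then EE else 0)" for c a unfolding u_def v_def by (rule fe')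
  have vQ: "i < d \<Longrightarrow> v i * Q = 0" for i unfolding v_def Q_def by (rule fQ)
  have Qu: "a < d \<Longrightarrow> Q * u a = 0" for a unfolding u_def Q_def by (rule Qe)
  have QQ: "Q * Q = Q" unfolding Q_def by (simp add: mon_mult)
  have Ev: "EE * v j = v j" for j unfolding v_def by (simp add: mult.assoc[symmetric] E_E)
  let ?S = "\<lambda>k. (\<Sum>i<d. u ((i + k) mod d) * v i)"
  have SQ: "?S k * Q = 0" for k
    by (simp add: sum_distrib_right mult.assoc vQ)
  have QS: "Q * ?S k = 0" for k
  proof -
    have "Q * ?S k = (\<Sum>i<d. (Q * u ((i + k) mod d)) * v i)" by (simp add: sum_distrib_left mult.assoc)
    also have "\<dots> = 0" using d by (simp add: Qu)
    finally show ?thesis .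
  qed
  have SS: "?S m * ?S m' = ?S (m + m')"
  proof -
    have "?S m * ?S m' = (\<Sum>j<d. \<Sum>i<d. u ((i + m) mod d) * (v i * u ((j + m') mod d)) * v j)"
      by (simp only: sum_distrib_right sum_distrib_left mult.assoc)
    also have "\<dots> = (\<Sum>j<d. \<Sum>i<d. if i = (j + m') mod d then u ((i + m) mod d) * v j else 0)"
      by (intro sum.cong refl) (simp add: vu Ev mult.assoc)
    also have "\<dots> = (\<Sum>j<d. u (((j + m') mod d + m) mod d) * v j)"
      using d by (simp add: sum.delta)
    also have "\<dots> = ?S (m + m')"
      by (intro sum.cong refl) (simp add: mod_add_left_eq add.assoc add.commute[of m m'])
    finally show ?thesis .
  qed
  show ?thesis unfolding Cm_uv
    by (simp add: distrib_left distrib_right SS SQ QS QQ)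
qed

lemma Cm0: "d > 0 \<Longrightarrow> Cm d 0 = (1 :: 'k::comm_ring_1 R)"
  by (simp add: Cm_def Psum[symmetric] Pp_def)

lemma Cm_mod: "Cm d m = Cm d (m mod d)"
  unfolding Cm_def by (simp add: mod_add_right_eq)

lemma Cm_pow: "d > 0 \<Longrightarrow> Cm d m ^ k = (Cm d (m * k) :: 'k::comm_ring_1 R)"
  by (induction k) (simp_all add: Cm0 Cm_mult[symmetric] mult.commute)

lemma lk_Cm:
  assumes "d > 0" "m < d" "m' < d"
  shows "lk (Cm d m' :: 'k::comm_ring_1 R) (B m 0) = (if m = m' then 1 else 0)"
proof -
  have "lk (Cm d m' :: 'k R) (B m 0) = (\<Sum>i<d. if m = (i + m') mod d \<and> i = 0 then 1 else 0)"
    using assms by (simp add: Cm_def lookup_add lookup_sum XEYg lookup_minus lk_mon cong: if_cong)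
  also have "\<dots> = (\<Sum>i<d. if i = 0 then (if m' mod d = m then 1 else 0) else 0)"
    by (intro sum.cong refl) auto
  also have "\<dots> = (if m = m' then 1 else 0)" using assms by (simp add: sum.delta')
  finally show ?thesis .
qed

lemma pow_cancel:
  fixes A Bm :: "'a::monoid_mult"
  assumes BA: "Bm * A = 1"
  shows "Bm ^ j * A ^ k = A ^ (k - j) * Bm ^ (j - k)"
proof (induction j arbitrary: k)
  case 0 then show ?case by simp
next
  case (Suc j)
  show ?case
  proof (cases k)
    case 0 then show ?thesis by simp
  next
    case (Suc k')
    have "Bm ^ Suc j * A ^ k = Bm ^ j * ((Bm * A) * A ^ k')"
      by (simp only: Suc power_Suc[of A k'] power_Suc2[of Bm j] mult.assoc)
    also have "\<dots> = Bm ^ j * A ^ k'" by (simp add: BA)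
    also have "\<dots> = A ^ (k' - j) * Bm ^ (j - k')" by (rule Suc.IH)
    finally show ?thesis using Suc by simp
  qed
qed

theorem part2R:
  fixes d :: nat
  assumes d: "d > 0"
  shows "\<exists>(\<Phi> :: 'k::field R \<Rightarrow> 'k R) Bs. rhom \<Phi> \<and> finite Bs \<and> card Bs = d \<and> Bs \<subseteq> range \<Phi> \<and>
     (\<forall>v\<in>range \<Phi>. \<exists>a. v = (\<Sum>b\<in>Bs. sc (a b) b)) \<and>
     (\<forall>a. (\<Sum>b\<in>Bs. sc (a b) b) = 0 \<longrightarrow> (\<forall>b\<in>Bs. a b = 0))"
proof -
  define A where "A = (Cm d 1 :: 'k R)"
  define Bm where "Bm = (Cm d (d - 1) :: 'k R)"
  have Cmd: "Cm d d = (1 :: 'k R)" using d by (subst Cm_mod) (simp add: Cm0)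
  have BA: "Bm * A = 1" unfolding A_def Bm_def using d by (simp add: Cm_mult Cmd)
  have AB: "A * Bm = 1" unfolding A_def Bm_def using d by (simp add: Cm_mult Cmd)
  define \<psi> where "\<psi> p = (case p of B i j \<Rightarrow> A ^ i * Bm ^ j)" for p
  have hom: "\<psi> (p + q) = \<psi> p * \<psi> q" for p q
  proof -
    obtain i j where p: "p = B i j" by (cases p)
    obtain k l where q: "q = B k l" by (cases q)
    have "\<psi> p * \<psi> q = A ^ i * (Bm ^ j * A ^ k) * Bm ^ l" by (simp add: \<psi>_def p q mult.assoc)
    also have "\<dots> = A ^ i * A ^ (k - j) * (Bm ^ (j - k) * Bm ^ l)"
      by (simp add: pow_cancel[OF BA] mult.assoc)
    also have "\<dots> = \<psi> (p + q)" by (simp add: \<psi>_def p q power_add add.commute[of l])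
    finally show ?thesis by simp
  qed
  have \<psi>0: "\<psi> 0 = 1" by (simp add: \<psi>_def zero_bic)
  define \<Phi> where "\<Phi> = ext \<psi>"
  have rh: "rhom \<Phi>" unfolding rhom_def \<Phi>_def
    by (simp add: ext_add ext_mult[of \<psi>, OF hom] ext_one[of \<psi>, OF \<psi>0] ext_sc)
  have \<psi>Cm: "\<psi> (B i j) = Cm d ((i + (d - 1) * j) mod d)" for i j
  proof -
    have "\<psi> (B i j) = Cm d (1 * i) * Cm d ((d - 1) * j)"
      by (simp add: \<psi>_def A_def Bm_def Cm_pow[OF d] mult.commute)
    also have "\<dots> = Cm d (i + (d - 1) * j)" by (simp add: Cm_mult[OF d])
    finally show ?thesis by (metis Cm_mod)
  qed
  define Bs where "Bs = (Cm d ` {..<d} :: 'k R set)"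
  have inj: "inj_on (Cm d :: nat \<Rightarrow> 'k R) {..<d}"
  proof (rule inj_onI)
    fix m m' assume m: "m \<in> {..<d}" and m': "m' \<in> {..<d}" and eq: "(Cm d m :: 'k R) = Cm d m'"
    have "lk (Cm d m :: 'k R) (B m 0) = lk (Cm d m') (B m 0)" using eq by simp
    then show "m = m'" using m m' d by (simp add: lk_Cm split: if_splits)
  qed
  have card: "card Bs = d" unfolding Bs_def using card_image[OF inj] by simp
  have fin: "finite Bs" unfolding Bs_def by simp
  have sub: "Bs \<subseteq> range \<Phi>"
  proof
    fix b assume "b \<in> Bs"
    then obtain m where m: "m < d" "b = Cm d m" unfolding Bs_def by auto
    have "\<Phi> (sng (B m 0) 1) = \<psi> (B m 0)" by (simp add: \<Phi>_def ext_sng sc_one)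
    also have "\<dots> = b" using m by (simp add: \<psi>Cm)
    finally show "b \<in> range \<Phi>" by (metis rangeI)
  qed
  interpret V: vector_space "sc :: 'k \<Rightarrow> 'k R \<Rightarrow> 'k R" by (rule vsR)
  have span: "\<forall>v\<in>range \<Phi>. \<exists>a. v = (\<Sum>b\<in>Bs. sc (a b) b)"
  proof
    fix v assume "v \<in> range \<Phi>"
    then obtain r where v: "v = \<Phi> r" by blast
    have "\<psi> p \<in> Bs" for p
    proof -
      obtain i j where "p = B i j" by (cases p)
      then show ?thesis using d by (simp add: \<psi>Cm Bs_def)
    qed
    then have "v \<in> V.span Bs" unfolding v \<Phi>_def ext_def
      by (intro V.span_sum V.span_scale V.span_base)
    then show "\<exists>a. v = (\<Sum>b\<in>Bs. sc (a b) b)" using V.span_finite[OF fin] by auto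
  qed
  have indep: "\<forall>a. (\<Sum>b\<in>Bs. sc (a b) b) = 0 \<longrightarrow> (\<forall>b\<in>Bs. a b = 0)"
  proof (intro allI impI ballI)
    fix a b assume z: "(\<Sum>b\<in>Bs. sc (a b) b) = 0" and b: "b \<in> Bs"
    then obtain m0 where m0: "m0 < d" "b = Cm d m0" unfolding Bs_def by auto
    have "(\<Sum>m<d. sc (a (Cm d m)) (Cm d m :: 'k R)) = 0"
      using z unfolding Bs_def by (simp add: sum.reindex[OF inj])
    then have "lk (\<Sum>m<d. sc (a (Cm d m)) (Cm d m :: 'k R)) (B m0 0) = 0" by simp
    then have "(\<Sum>m<d. a (Cm d m) * lk (Cm d m :: 'k R) (B m0 0)) = 0"
      by (simp add: lookup_sum lk_sc)
    moreover have "(\<Sum>m<d. a (Cm d m) * lk (Cm d m :: 'k R) (B m0 0)) =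
        (\<Sum>m<d. if m0 = m then a (Cm d m) else 0)"
      by (intro sum.cong refl) (use m0 d in \<open>simp add: lk_Cm\<close>)
    ultimately have "(\<Sum>m<d. if m0 = m then a (Cm d m) else 0) = 0" by simp
    then show "a b = 0" using m0 by (simp add: sum.delta)
  qed
  show ?thesis using rh fin card sub span indep by blast
qed


definition unB :: "bic \<Rightarrow> nat \<times> nat" where "unB p = (case p of B i j \<Rightarrow> (i, j))"
definition toB :: "nat \<times> nat \<Rightarrow> bic" where "toB p = B (fst p) (snd p)"

lemma unB_toB[simp]: "unB (toB p) = p" by (simp add: unB_def toB_def)
lemma toB_unB[simp]: "toB (unB b) = b" by (cases b) (simp add: unB_def toB_def)
lemma inj_toB: "inj toB" by (metis injI unB_toB)
lemma inj_unB: "inj unB" by (metis injI toB_unB)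
lemma toB_bmul: "toB (bmul p q) = toB p + toB q"
  by (cases p; cases q) (simp add: toB_def bmul_def)

definition toR :: "'k::field s1elt \<Rightarrow> 'k R" where
  "toR f = Abs_poly_mapping (\<lambda>b. f (unB b))"
definition ofR :: "'k::field R \<Rightarrow> 'k s1elt" where
  "ofR r = (\<lambda>p. lk r (toB p))"

lemma fin_toR: "f \<in> S1 \<Longrightarrow> finite {b. f (unB b) \<noteq> 0}"
proof -
  assume "f \<in> S1"
  then have "finite (toB ` supp1 f)" by (simp add: S1_def)
  moreover have "{b. f (unB b) \<noteq> 0} = toB ` supp1 f"
  proof
    show "{b. f (unB b) \<noteq> 0} \<subseteq> toB ` supp1 f"
    proof
      fix b assume "b \<in> {b. f (unB b) \<noteq> 0}"
      then have "unB b \<in> supp1 f" by (simp add: supp1_def)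
      then have "toB (unB b) \<in> toB ` supp1 f" by blast
      then show "b \<in> toB ` supp1 f" by simp
    qed
    show "toB ` supp1 f \<subseteq> {b. f (unB b) \<noteq> 0}" by (auto simp: supp1_def)
  qed
  ultimately show ?thesis by simp
qed

lemma lk_toR: "f \<in> S1 \<Longrightarrow> lk (toR f) b = f (unB b)"
  by (simp add: toR_def fin_toR)

lemma ofR_toR: "f \<in> S1 \<Longrightarrow> ofR (toR f) = f"
  by (simp add: ofR_def lk_toR)

lemma supp_ofR: "supp1 (ofR r) = unB ` ks r"
proof
  show "supp1 (ofR r) \<subseteq> unB ` ks r"
  proof
    fix p assume "p \<in> supp1 (ofR r)"
    then have "toB p \<in> ks r" by (simp add: supp1_def ofR_def in_keys_iff)
    then have "unB (toB p) \<in> unB ` ks r" by blast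
    then show "p \<in> unB ` ks r" by simp
  qed
  show "unB ` ks r \<subseteq> supp1 (ofR r)" by (auto simp: supp1_def ofR_def in_keys_iff)
qed

lemma ofR_S1: "ofR r \<in> S1"
  by (simp add: S1_def supp_ofR)

lemma toR_ofR: "toR (ofR r) = r"
proof (rule poly_mapping_eqI)
  fix k show "lk (toR (ofR r)) k = lk r k" by (simp only: lk_toR[OF ofR_S1]) (simp add: ofR_def)
qed

lemma inj_ofR: "inj ofR" by (metis injI toR_ofR)

lemma ofR_add: "ofR (r + s) = s1_add (ofR r) (ofR s)"
  by (simp add: ofR_def s1_add_def lookup_add)

lemma ofR_sc: "ofR (sc c r) = s1_scale c (ofR r)"
  by (simp add: ofR_def s1_scale_def lk_sc)

lemma ofR_one: "ofR 1 = s1_one"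
  by (auto simp: ofR_def s1_one_def lookup_one when_def zero_bic toB_def)

lemma ofR_zero: "ofR 0 = s1_zero"
  by (simp add: ofR_def s1_zero_def)

lemma ofR_mult: "ofR (r * s) = s1_mult (ofR r) (ofR s)"
proof
  fix q
  have "s1_mult (ofR r) (ofR s) q =
      (\<Sum>p\<in>unB ` ks r. \<Sum>p'\<in>unB ` ks s. if bmul p p' = q then ofR r p * ofR s p' else 0)"
    by (simp add: s1_mult_def supp_ofR)
  also have "\<dots> = (\<Sum>l\<in>ks r. \<Sum>l'\<in>ks s. if bmul (unB l) (unB l') = q then lk r l * lk s l' else 0)"
    by (simp add: sum.reindex[OF inj_on_subset[OF inj_unB]] ofR_def cong: if_cong)
  also have "\<dots> = (\<Sum>l\<in>ks r. \<Sum>l'\<in>ks s. if toB q = l + l' then lk r l * lk s l' else 0)"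
  proof (intro sum.cong refl)
    fix l l'
    have "(bmul (unB l) (unB l') = q) = (toB (bmul (unB l) (unB l')) = toB q)"
      using inj_toB by (auto dest: injD)
    also have "\<dots> = (toB q = l + l')" by (auto simp: toB_bmul)
    finally show "(if bmul (unB l) (unB l') = q then lk r l * lk s l' else 0) =
                  (if toB q = l + l' then lk r l * lk s l' else 0)" by simp
  qed
  also have "\<dots> = ofR (r * s) q" by (simp add: ofR_def lookup_mult_fin)
  finally show "ofR (r * s) q = s1_mult (ofR r) (ofR s) q" by simp
qed

lemma toR_add: "f \<in> S1 \<Longrightarrow> g \<in> S1 \<Longrightarrow> toR (s1_add f g) = toR f + toR g"
  by (metis ofR_add ofR_toR toR_ofR)
lemma toR_mult: "f \<in> S1 \<Longrightarrow> g \<in> S1 \<Longrightarrow> toR (s1_mult f g) = toR f * toR g"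
  by (metis ofR_mult ofR_toR toR_ofR)
lemma toR_scale: "f \<in> S1 \<Longrightarrow> toR (s1_scale c f) = sc c (toR f)"
  by (metis ofR_sc ofR_toR toR_ofR)
lemma toR_one: "toR s1_one = 1"
  by (metis ofR_one toR_ofR)

lemma fold_ofR:
  assumes "finite Bs"
  shows "fold_s1 (\<lambda>b'. a (toR b')) (ofR ` Bs) = ofR (\<Sum>b\<in>Bs. sc (a b) b)"
proof
  fix p
  have "fold_s1 (\<lambda>b'. a (toR b')) (ofR ` Bs) p = (\<Sum>b\<in>Bs. a b * ofR b p)"
    unfolding fold_s1_def by (simp add: sum.reindex[OF inj_on_subset[OF inj_ofR]] toR_ofR)
  also have "\<dots> = ofR (\<Sum>b\<in>Bs. sc (a b) b) p"
    by (simp add: ofR_def lookup_sum lk_sc)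
  finally show "fold_s1 (\<lambda>b'. a (toR b')) (ofR ` Bs) p = ofR (\<Sum>b\<in>Bs. sc (a b) b) p" .
qed


lemma part1:
  fixes \<phi> :: "'k::field_char_0 s1elt \<Rightarrow> 'k s1elt"
  assumes e: "s1_endo \<phi>"
  shows "inj_on \<phi> S1 \<or> (s1_commutative (\<phi> ` S1) \<and> s1_fin_dim (\<phi> ` S1))"
proof -
  have img: "\<phi> f \<in> S1" if "f \<in> S1" for f using e that unfolding s1_endo_def by blast
  have padd: "\<phi> (s1_add f g) = s1_add (\<phi> f) (\<phi> g)" if "f \<in> S1" "g \<in> S1" for f g
    using e that unfolding s1_endo_def by blast
  have pmult: "\<phi> (s1_mult f g) = s1_mult (\<phi> f) (\<phi> g)" if "f \<in> S1" "g \<in> S1" for f g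
    using e that unfolding s1_endo_def by blast
  have psc: "\<phi> (s1_scale c f) = s1_scale c (\<phi> f)" if "f \<in> S1" for c f
    using e that unfolding s1_endo_def by blast
  have pone: "\<phi> s1_one = s1_one" using e unfolding s1_endo_def by blast
  define \<Phi> where "\<Phi> r = toR (\<phi> (ofR r))" for r
  have rh: "rhom \<Phi>" unfolding rhom_def
  proof (intro conjI allI)
    fix r s
    show "\<Phi> (r + s) = \<Phi> r + \<Phi> s"
      by (simp add: \<Phi>_def ofR_add padd ofR_S1 toR_add img)
    show "\<Phi> (r * s) = \<Phi> r * \<Phi> s"
      by (simp add: \<Phi>_def ofR_mult pmult ofR_S1 toR_mult img)
  next
    show "\<Phi> 1 = 1" by (simp add: \<Phi>_def ofR_one pone toR_one)
  next
    fix c r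
    show "\<Phi> (sc c r) = sc c (\<Phi> r)"
      by (simp add: \<Phi>_def ofR_sc psc ofR_S1 toR_scale img)
  qed
  have PhiT: "\<Phi> (toR f) = toR (\<phi> f)" if "f \<in> S1" for f
    by (simp add: \<Phi>_def ofR_toR that)
  have range_eq: "\<phi> ` S1 = ofR ` range \<Phi>"
  proof
    show "\<phi> ` S1 \<subseteq> ofR ` range \<Phi>"
    proof
      fix v assume "v \<in> \<phi> ` S1"
      then obtain f where f: "f \<in> S1" "v = \<phi> f" by blast
      have "v = ofR (\<Phi> (toR f))" using f by (simp add: PhiT ofR_toR img)
      then show "v \<in> ofR ` range \<Phi>" by blast
    qed
    show "ofR ` range \<Phi> \<subseteq> \<phi> ` S1"
    proof
      fix v assume "v \<in> ofR ` range \<Phi>"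
      then obtain r where r: "v = ofR (\<Phi> r)" by blast
      have "v = \<phi> (ofR r)" using r by (simp add: \<Phi>_def ofR_toR img ofR_S1)
      then show "v \<in> \<phi> ` S1" using ofR_S1 by blast
    qed
  qed
  from part1R[OF rh] show ?thesis
  proof
    assume inj: "inj \<Phi>"
    have "inj_on \<phi> S1"
    proof (rule inj_onI)
      fix f g assume f: "f \<in> S1" and g: "g \<in> S1" and eq: "\<phi> f = \<phi> g"
      have "\<Phi> (toR f) = \<Phi> (toR g)" using f g eq by (simp add: PhiT)
      then have "toR f = toR g" using inj by (auto dest: injD)
      then show "f = g" by (metis f g ofR_toR)
    qed
    then show ?thesis by blast
  next
    assume h: "(\<forall>x\<in>range \<Phi>. \<forall>y\<in>range \<Phi>. x * y = y * x) \<and>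
           (\<exists>Bs. finite Bs \<and> Bs \<subseteq> range \<Phi> \<and> (\<forall>v\<in>range \<Phi>. \<exists>a. v = (\<Sum>b\<in>Bs. sc (a b) b)))"
    have comm: "s1_commutative (\<phi> ` S1)"
      unfolding s1_commutative_def range_eq
    proof (intro ballI)
      fix a b assume "a \<in> ofR ` range \<Phi>" "b \<in> ofR ` range \<Phi>"
      then obtain x y where "x \<in> range \<Phi>" "y \<in> range \<Phi>" "a = ofR x" "b = ofR y" by blast
      then show "s1_mult a b = s1_mult b a" using h by (metis ofR_mult)
    qed
    obtain Bs where Bs: "finite Bs" "Bs \<subseteq> range \<Phi>" "\<forall>v\<in>range \<Phi>. \<exists>a. v = (\<Sum>b\<in>Bs. sc (a b) b)"
      using h by blast
    have "s1_fin_dim (\<phi> ` S1)"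
      unfolding s1_fin_dim_def range_eq
    proof (intro exI conjI)
      show "finite (ofR ` Bs)" using Bs by simp
      show "ofR ` Bs \<subseteq> ofR ` range \<Phi>" using Bs by blast
      show "s1_spans (ofR ` Bs) (ofR ` range \<Phi>)"
        unfolding s1_spans_def
      proof
        fix v assume "v \<in> ofR ` range \<Phi>"
        then obtain x where x: "x \<in> range \<Phi>" "v = ofR x" by blast
        then obtain a where "x = (\<Sum>b\<in>Bs. sc (a b) b)" using Bs by blast
        then have "v = fold_s1 (\<lambda>b'. a (toR b')) (ofR ` Bs)" using x fold_ofR[OF Bs(1)] by simp
        then show "\<exists>a. v = fold_s1 a (ofR ` Bs)" by blast
      qed
    qed
    then show ?thesis using comm by blast
  qed
qed

lemma part2:
  fixes d :: nat
  assumes d: "d > 0"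
  shows "\<exists>\<phi> :: 'k::field_char_0 s1elt \<Rightarrow> 'k s1elt. s1_endo \<phi> \<and> s1_has_dim (\<phi> ` S1) d"
proof -
  obtain \<Phi> :: "'k R \<Rightarrow> 'k R" and Bs where rh: "rhom \<Phi>" and fin: "finite Bs" and card: "card Bs = d"
    and sub: "Bs \<subseteq> range \<Phi>" and span: "\<forall>v\<in>range \<Phi>. \<exists>a. v = (\<Sum>b\<in>Bs. sc (a b) b)"
    and indep: "\<forall>a. (\<Sum>b\<in>Bs. sc (a b) b) = 0 \<longrightarrow> (\<forall>b\<in>Bs. a b = 0)"
    using part2R[OF d] by blast
  define \<phi> where "\<phi> f = ofR (\<Phi> (toR f))" for f :: "'k s1elt"
  have endo: "s1_endo \<phi>"
    unfolding s1_endo_def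
  proof (intro conjI ballI allI)
    show "\<phi> ` S1 \<subseteq> S1" by (auto simp: \<phi>_def ofR_S1)
  next
    fix f g :: "'k s1elt" assume f: "f \<in> S1" and g: "g \<in> S1"
    show "\<phi> (s1_add f g) = s1_add (\<phi> f) (\<phi> g)"
      using f g by (simp add: \<phi>_def toR_add rh_add[OF rh] ofR_add)
    show "\<phi> (s1_mult f g) = s1_mult (\<phi> f) (\<phi> g)"
      using f g by (simp add: \<phi>_def toR_mult rh_mult[OF rh] ofR_mult)
  next
    fix c and f :: "'k s1elt" assume f: "f \<in> S1"
    show "\<phi> (s1_scale c f) = s1_scale c (\<phi> f)"
      using f by (simp add: \<phi>_def toR_scale rh_sc[OF rh] ofR_sc)
  next
    show "\<phi> s1_one = s1_one" by (simp add: \<phi>_def toR_one rh_one[OF rh] ofR_one)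
  qed
  have range_eq: "\<phi> ` S1 = ofR ` range \<Phi>"
  proof
    show "\<phi> ` S1 \<subseteq> ofR ` range \<Phi>" by (auto simp: \<phi>_def)
    show "ofR ` range \<Phi> \<subseteq> \<phi> ` S1"
    proof
      fix v assume "v \<in> ofR ` range \<Phi>"
      then obtain r where r: "v = ofR (\<Phi> r)" by blast
      have "v = \<phi> (ofR r)" using r by (simp add: \<phi>_def toR_ofR)
      then show "v \<in> \<phi> ` S1" using ofR_S1 by blast
    qed
  qed
  have "s1_has_dim (\<phi> ` S1) d"
    unfolding s1_has_dim_def range_eq
  proof (intro exI conjI)
    show "finite (ofR ` Bs)" using fin by simp
    have "inj_on (ofR :: 'k R \<Rightarrow> 'k s1elt) Bs" by (metis inj_ofR inj_on_subset subset_UNIV)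
    then show "card (ofR ` Bs) = d" using card by (simp add: card_image)
    show "ofR ` Bs \<subseteq> ofR ` range \<Phi>" using sub by blast
    show "s1_spans (ofR ` Bs) (ofR ` range \<Phi>)"
      unfolding s1_spans_def
    proof
      fix v assume "v \<in> ofR ` range \<Phi>"
      then obtain x where x: "x \<in> range \<Phi>" "v = ofR x" by blast
      then obtain a where "x = (\<Sum>b\<in>Bs. sc (a b) b)" using span by blast
      then have "v = fold_s1 (\<lambda>b'. a (toR b')) (ofR ` Bs)" using x fold_ofR[OF fin] by simp
      then show "\<exists>a. v = fold_s1 a (ofR ` Bs)" by blast
    qed
    show "s1_lin_indep (ofR ` Bs)"
      unfolding s1_lin_indep_def
    proof (intro allI impI ballI)
      fix a b' assume z: "fold_s1 a (ofR ` Bs) = s1_zero" and b': "b' \<in> ofR ` Bs"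
      define a' where "a' b = a (ofR b)" for b
      have "fold_s1 a (ofR ` Bs) = fold_s1 (\<lambda>b'. a' (toR b')) (ofR ` Bs)"
        unfolding fold_s1_def a'_def by (intro ext sum.cong refl) (auto simp: toR_ofR)
      then have "ofR (\<Sum>b\<in>Bs. sc (a' b) b) = ofR 0" using z fold_ofR[OF fin] by (simp add: ofR_zero)
      then have "(\<Sum>b\<in>Bs. sc (a' b) b) = 0" using inj_ofR by (auto dest: injD)
      then have "\<forall>b\<in>Bs. a' b = 0" using indep by blast
      then show "a b' = 0" using b' unfolding a'_def by blast
    qed
  qed
  then show ?thesis using endo by blast
qed

theorem proposition4p7:
  shows "(\<forall>\<phi> :: 'k::field_char_0 s1elt \<Rightarrow> 'k s1elt. s1_endo \<phi> \<longrightarrow>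
            inj_on \<phi> S1 \<or> (s1_commutative (\<phi> ` S1) \<and> s1_fin_dim (\<phi> ` S1)))
       \<and> (\<forall>d::nat. d > 0 \<longrightarrow>
            (\<exists>\<phi> :: 'k s1elt \<Rightarrow> 'k s1elt. s1_endo \<phi> \<and> s1_has_dim (\<phi> ` S1) d))"
  using part1 part2 by blast


end
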